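(* Let $L\subseteq Q$ be a dense extension of Lie algebras such that $Q$ is a multiplicatively semiprime algebra of quotients of $L$. Then for every essential ideal $I$ of $L$, the extension $I\subseteq Q$ is dense.
   Context: Lie algebras over a commutative unital ring $\Phi$. $\mathrm{ad}_x(y)=[x,y]$; $M(Q)$ is the subalgebra of $\mathrm{End}_\Phi(Q)$ generated by the identity and all $\mathrm{ad}_x$, $x\in Q$. For a Lie subalgebra $S\subseteq Q$, the extension $S\subseteq Q$ is dense if the only $\mu\in M(Q)$ with $\mu(S)=0$ is $\mu=0$. A Lie algebra is semiprime if $[I,I]\ne0$ for each nonzero ideal $I$; $Q$ is multiplicatively semiprime if $Q$ and $M(Q)$ are semiprime. An ideal $I$ of $L$ is essential if it meets every nonzero ideal of $L$ nontrivially. $\mathrm{Ann}_L(X)=\{a\in L:[a,X]=0\}$. $Q$ is an algebra of quotients of $L$ if for every nonzero $q\in Q$ there is an ideal $J$ of $L$ with $\mathrm{Ann}_L(J)=0$ and $0\ne[J,q]\subseteq L$. *)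

theory Defs
  imports Main "HOL.Modules"
begin

text \<open>Lie algebras over a commutative unital ring. The scalar ring is a type
 'r :: comm_ring_1, the ambient Lie algebra Q is the whole type 'q with scalar
 multiplication scale and bracket br.\<close>

definition lie_algebra :: "('r::comm_ring_1 \<Rightarrow> 'q::ab_group_add \<Rightarrow> 'q) \<Rightarrow> ('q \<Rightarrow> 'q \<Rightarrow> 'q) \<Rightarrow> bool" where
  "lie_algebra scale br \<longleftrightarrow>
     module scale \<and>
     (\<forall>x y z. br (x + y) z = br x z + br y z) \<and>
     (\<forall>x y z. br x (y + z) = br x y + br x z) \<and>
     (\<forall>c x y. br (scale c x) y = scale c (br x y)) \<and>
     (\<forall>c x y. br x (scale c y) = scale c (br x y)) \<and>
     (\<forall>x. br x x = 0) \<and>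
     (\<forall>x y z. br x (br y z) + br y (br z x) + br z (br x y) = 0)"

definition submodule :: "('r::comm_ring_1 \<Rightarrow> 'q::ab_group_add \<Rightarrow> 'q) \<Rightarrow> 'q set \<Rightarrow> bool" where
  "submodule scale S \<longleftrightarrow> 0 \<in> S \<and> (\<forall>x\<in>S. \<forall>y\<in>S. x + y \<in> S) \<and> (\<forall>c. \<forall>x\<in>S. scale c x \<in> S)"

definition lie_subalgebra :: "('r::comm_ring_1 \<Rightarrow> 'q::ab_group_add \<Rightarrow> 'q) \<Rightarrow> ('q \<Rightarrow> 'q \<Rightarrow> 'q) \<Rightarrow> 'q set \<Rightarrow> bool" where
  "lie_subalgebra scale br S \<longleftrightarrow> submodule scale S \<and> (\<forall>x\<in>S. \<forall>y\<in>S. br x y \<in> S)"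

definition lie_ideal :: "('r::comm_ring_1 \<Rightarrow> 'q::ab_group_add \<Rightarrow> 'q) \<Rightarrow> ('q \<Rightarrow> 'q \<Rightarrow> 'q) \<Rightarrow> 'q set \<Rightarrow> 'q set \<Rightarrow> bool" where
  "lie_ideal scale br L I \<longleftrightarrow> I \<subseteq> L \<and> submodule scale I \<and> (\<forall>a\<in>I. \<forall>x\<in>L. br a x \<in> I)"

definition lie_semiprime :: "('r::comm_ring_1 \<Rightarrow> 'q::ab_group_add \<Rightarrow> 'q) \<Rightarrow> ('q \<Rightarrow> 'q \<Rightarrow> 'q) \<Rightarrow> bool" where
  "lie_semiprime scale br \<longleftrightarrow>
     (\<forall>I. lie_ideal scale br UNIV I \<and> I \<noteq> {0} \<longrightarrow> (\<exists>a\<in>I. \<exists>b\<in>I. br a b \<noteq> 0))"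

inductive_set mult_alg :: "('r::comm_ring_1 \<Rightarrow> 'q::ab_group_add \<Rightarrow> 'q) \<Rightarrow> ('q \<Rightarrow> 'q \<Rightarrow> 'q) \<Rightarrow> ('q \<Rightarrow> 'q) set"
  for scale br where
  id_in: "id \<in> mult_alg scale br"
| ad_in: "br x \<in> mult_alg scale br"
| add_in: "f \<in> mult_alg scale br \<Longrightarrow> g \<in> mult_alg scale br \<Longrightarrow> (\<lambda>v. f v + g v) \<in> mult_alg scale br"
| scale_in: "f \<in> mult_alg scale br \<Longrightarrow> (\<lambda>v. scale c (f v)) \<in> mult_alg scale br"
| comp_in: "f \<in> mult_alg scale br \<Longrightarrow> g \<in> mult_alg scale br \<Longrightarrow> f \<circ> g \<in> mult_alg scale br"

definition mult_ideal :: "('r::comm_ring_1 \<Rightarrow> 'q::ab_group_add \<Rightarrow> 'q) \<Rightarrow> ('q \<Rightarrow> 'q \<Rightarrow> 'q) \<Rightarrow> ('q \<Rightarrow> 'q) set \<Rightarrow> bool" where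
  "mult_ideal scale br I \<longleftrightarrow> I \<subseteq> mult_alg scale br \<and> (\<lambda>v. 0) \<in> I \<and>
     (\<forall>f\<in>I. \<forall>g\<in>I. (\<lambda>v. f v + g v) \<in> I) \<and> (\<forall>c. \<forall>f\<in>I. (\<lambda>v. scale c (f v)) \<in> I) \<and>
     (\<forall>f\<in>I. \<forall>m\<in>mult_alg scale br. m \<circ> f \<in> I \<and> f \<circ> m \<in> I)"

definition mult_alg_semiprime :: "('r::comm_ring_1 \<Rightarrow> 'q::ab_group_add \<Rightarrow> 'q) \<Rightarrow> ('q \<Rightarrow> 'q \<Rightarrow> 'q) \<Rightarrow> bool" where
  "mult_alg_semiprime scale br \<longleftrightarrow>
     (\<forall>I. mult_ideal scale br I \<and> I \<noteq> {\<lambda>v. 0} \<longrightarrow> (\<exists>f\<in>I. \<exists>g\<in>I. f \<circ> g \<noteq> (\<lambda>v. 0)))"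

definition mult_semiprime :: "('r::comm_ring_1 \<Rightarrow> 'q::ab_group_add \<Rightarrow> 'q) \<Rightarrow> ('q \<Rightarrow> 'q \<Rightarrow> 'q) \<Rightarrow> bool" where
  "mult_semiprime scale br \<longleftrightarrow> lie_semiprime scale br \<and> mult_alg_semiprime scale br"

definition dense_ext :: "('r::comm_ring_1 \<Rightarrow> 'q::ab_group_add \<Rightarrow> 'q) \<Rightarrow> ('q \<Rightarrow> 'q \<Rightarrow> 'q) \<Rightarrow> 'q set \<Rightarrow> bool" where
  "dense_ext scale br S \<longleftrightarrow>
     (\<forall>\<mu>\<in>mult_alg scale br. (\<forall>s\<in>S. \<mu> s = 0) \<longrightarrow> \<mu> = (\<lambda>v. 0))"

definition essential_ideal :: "('r::comm_ring_1 \<Rightarrow> 'q::ab_group_add \<Rightarrow> 'q) \<Rightarrow> ('q \<Rightarrow> 'q \<Rightarrow> 'q) \<Rightarrow> 'q set \<Rightarrow> 'q set \<Rightarrow> bool" where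
  "essential_ideal scale br L I \<longleftrightarrow> lie_ideal scale br L I \<and>
     (\<forall>J. lie_ideal scale br L J \<and> J \<noteq> {0} \<longrightarrow> I \<inter> J \<noteq> {0})"

definition Ann :: "('q::ab_group_add \<Rightarrow> 'q \<Rightarrow> 'q) \<Rightarrow> 'q set \<Rightarrow> 'q set \<Rightarrow> 'q set" where
  "Ann br L X = {a \<in> L. \<forall>x\<in>X. br a x = 0}"

definition algebra_of_quotients :: "('r::comm_ring_1 \<Rightarrow> 'q::ab_group_add \<Rightarrow> 'q) \<Rightarrow> ('q \<Rightarrow> 'q \<Rightarrow> 'q) \<Rightarrow> 'q set \<Rightarrow> bool" where
  "algebra_of_quotients scale br L \<longleftrightarrow>
     (\<forall>q. q \<noteq> 0 \<longrightarrow> (\<exists>J. lie_ideal scale br L J \<and> Ann br L J = {0} \<and>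
          (\<forall>j\<in>J. br j q \<in> L) \<and> (\<exists>j\<in>J. br j q \<noteq> 0)))"

end

theory Submission
  imports Defs
begin

lemma la_module: "lie_algebra scale br \<Longrightarrow> module scale"
  by (simp add: lie_algebra_def)
lemma la_addL: "lie_algebra scale br \<Longrightarrow> br (x + y) z = br x z + br y z"
  by (simp add: lie_algebra_def)
lemma la_addR: "lie_algebra scale br \<Longrightarrow> br x (y + z) = br x y + br x z"
  by (simp add: lie_algebra_def)
lemma la_scaleL: "lie_algebra scale br \<Longrightarrow> br (scale c x) y = scale c (br x y)"
  by (simp add: lie_algebra_def)
lemma la_scaleR: "lie_algebra scale br \<Longrightarrow> br x (scale c y) = scale c (br x y)"
  by (simp add: lie_algebra_def)
lemma la_alt: "lie_algebra scale br \<Longrightarrow> br x x = 0"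
  by (simp add: lie_algebra_def)
lemma la_jac: "lie_algebra scale br \<Longrightarrow> br x (br y z) + br y (br z x) + br z (br x y) = 0"
  by (simp add: lie_algebra_def)

lemma la_zeroR: assumes "lie_algebra scale br" shows "br x 0 = 0"
proof -
  have "br x (0 + 0) = br x 0 + br x 0" by (rule la_addR[OF assms])
  then show ?thesis by simp
qed

lemma la_zeroL: assumes "lie_algebra scale br" shows "br 0 x = 0"
proof -
  have "br (0 + 0) x = br 0 x + br 0 x" by (rule la_addL[OF assms])
  then show ?thesis by simp
qed

lemma la_anti: assumes "lie_algebra scale br" shows "br x y = - br y x"
proof -
  have "0 = br (x + y) (x + y)" using la_alt[OF assms] by simp
  also have "\<dots> = br x x + br x y + (br y x + br y y)"
    using la_addL[OF assms] la_addR[OF assms] by (simp add: add.assoc)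
  also have "\<dots> = br x y + br y x" using la_alt[OF assms] by simp
  finally show ?thesis by (simp add: eq_neg_iff_add_eq_0)
qed

lemma la_negR: assumes "lie_algebra scale br" shows "br x (- y) = - br x y"
proof -
  have "br x (y + - y) = br x y + br x (- y)" by (rule la_addR[OF assms])
  then have "br x y + br x (- y) = 0" using la_zeroR[OF assms] by simp
  then show ?thesis by (simp add: eq_neg_iff_add_eq_0 add.commute)
qed

lemma ma_lin:
  assumes la: "lie_algebra scale br" and f: "f \<in> mult_alg scale br"
  shows "\<forall>x y c. f (x + y) = f x + f y \<and> f (scale c x) = scale c (f x)"
  using f
proof induction
  case id_in then show ?case by simp
next
  case (ad_in x) then show ?case using la_addR[OF la] la_scaleR[OF la] by simp
next
  case (add_in f g) then show ?case
    using module.scale_right_distrib[OF la_module[OF la]] by (simp add: algebra_simps)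
next
  case (scale_in f c) then show ?case
    using module.scale_right_distrib[OF la_module[OF la]]
      module.scale_left_commute[OF la_module[OF la]] by simp
next
  case (comp_in f g) then show ?case by simp
qed

lemma ma_add: "lie_algebra scale br \<Longrightarrow> f \<in> mult_alg scale br \<Longrightarrow> f (x + y) = f x + f y"
  using ma_lin by blast
lemma ma_scale: "lie_algebra scale br \<Longrightarrow> f \<in> mult_alg scale br \<Longrightarrow> f (scale c x) = scale c (f x)"
  using ma_lin by blast
lemma ma_zero: assumes "lie_algebra scale br" "f \<in> mult_alg scale br" shows "f 0 = 0"
proof -
  have "f (0 + 0) = f 0 + f 0" by (rule ma_add[OF assms])
  then show ?thesis by simp
qed
lemma ma_neg: assumes "lie_algebra scale br" "f \<in> mult_alg scale br" shows "f (- x) = - f x"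
proof -
  have "f (x + - x) = f x + f (- x)" by (rule ma_add[OF assms])
  then have "f x + f (- x) = 0" using ma_zero[OF assms] by simp
  then show ?thesis by (simp add: eq_neg_iff_add_eq_0 add.commute)
qed

lemma ma_zerofun: assumes "lie_algebra scale br" shows "(\<lambda>v. 0) \<in> mult_alg scale br"
proof -
  have "(\<lambda>v. scale 0 (id v)) \<in> mult_alg scale br"
    by (rule mult_alg.scale_in[OF mult_alg.id_in])
  moreover have "(\<lambda>v. scale 0 (id v)) = (\<lambda>v. 0)"
    using module.scale_zero_left[OF la_module[OF assms]] by auto
  ultimately show ?thesis by simp
qed

theorem mainTheorem16:
  fixes scale :: "'r::comm_ring_1 \<Rightarrow> 'q::ab_group_add \<Rightarrow> 'q"
    and br :: "'q \<Rightarrow> 'q \<Rightarrow> 'q"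
    and L I :: "'q set"
  assumes "lie_algebra scale br"
    and "lie_subalgebra scale br L"
    and "dense_ext scale br L"
    and "mult_semiprime scale br"
    and "algebra_of_quotients scale br L"
    and "essential_ideal scale br L I"
  shows "dense_ext scale br I"
proof -
  have la: "lie_algebra scale br" using assms(1) .
  have md: "module scale" using la_module[OF la] .
  from assms(2) have Lsub: "submodule scale L" and Lbr: "\<forall>x\<in>L. \<forall>y\<in>L. br x y \<in> L"
    by (auto simp: lie_subalgebra_def)
  from assms(6) have Iid: "lie_ideal scale br L I"
    and ess: "\<forall>J. lie_ideal scale br L J \<and> J \<noteq> {0} \<longrightarrow> I \<inter> J \<noteq> {0}"
    by (auto simp: essential_ideal_def)
  from Iid have IL: "I \<subseteq> L" and Ibr: "\<forall>a\<in>I. \<forall>x\<in>L. br a x \<in> I"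
    by (auto simp: lie_ideal_def)
  have dense: "\<And>\<mu>. \<mu> \<in> mult_alg scale br \<Longrightarrow> (\<forall>s\<in>L. \<mu> s = 0) \<Longrightarrow> \<mu> = (\<lambda>v. 0)"
    using assms(3) by (auto simp: dense_ext_def)
  have lsp: "lie_semiprime scale br" and msp: "mult_alg_semiprime scale br"
    using assms(4) by (auto simp: mult_semiprime_def)
  define N where "N = {f \<in> mult_alg scale br. \<forall>i\<in>I. f i = 0}"
  have N1: "f (br i q) = 0" if f: "f \<in> N" and i: "i \<in> I" for f i q
  proof -
    have "f \<circ> br i \<in> mult_alg scale br" using f
      by (auto simp: N_def intro: mult_alg.comp_in mult_alg.ad_in)
    moreover have "\<forall>s\<in>L. (f \<circ> br i) s = 0" using f i Ibr by (auto simp: N_def)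
    ultimately have "f \<circ> br i = (\<lambda>v. 0)" by (rule dense)
    then show "f (br i q) = 0" by (metis comp_apply)
  qed
  have N2: "\<forall>f\<in>N. f \<circ> m \<in> N" if m: "m \<in> mult_alg scale br" for m
    using m
  proof induction
    case id_in then show ?case by simp
  next
    case (ad_in x) show ?case
    proof
      fix f assume f: "f \<in> N"
      then have fM: "f \<in> mult_alg scale br" by (simp add: N_def)
      have "f (br x i) = 0" if i: "i \<in> I" for i
      proof -
        have "f (br x i) = f (- br i x)" using la_anti[OF la] by metis
        also have "\<dots> = - f (br i x)" by (rule ma_neg[OF la fM])
        also have "\<dots> = 0" using N1[OF f i] by simp
        finally show ?thesis .
      qed
      then show "f \<circ> br x \<in> N" using fM
        by (auto simp: N_def intro: mult_alg.comp_in mult_alg.ad_in)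
    qed
  next
    case (add_in g h) show ?case
    proof
      fix f assume f: "f \<in> N"
      then have fM: "f \<in> mult_alg scale br" by (simp add: N_def)
      have "(f \<circ> (\<lambda>v. g v + h v)) \<in> mult_alg scale br"
        using fM add_in by (auto intro: mult_alg.comp_in mult_alg.add_in)
      moreover have "f (g i + h i) = 0" if i: "i \<in> I" for i
      proof -
        have "f (g i + h i) = (f \<circ> g) i + (f \<circ> h) i" using ma_add[OF la fM] by simp
        moreover have "f \<circ> g \<in> N" "f \<circ> h \<in> N" using add_in.IH f by blast+
        ultimately show ?thesis using i by (simp add: N_def)
      qed
      ultimately show "f \<circ> (\<lambda>v. g v + h v) \<in> N" by (simp add: N_def)
    qed
  next
    case (scale_in g c) show ?case
    proof
      fix f assume f: "f \<in> N"
      then have fM: "f \<in> mult_alg scale br" by (simp add: N_def)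
      have "(f \<circ> (\<lambda>v. scale c (g v))) \<in> mult_alg scale br"
        using fM scale_in by (auto intro: mult_alg.comp_in mult_alg.scale_in)
      moreover have "f (scale c (g i)) = 0" if i: "i \<in> I" for i
      proof -
        have "f (scale c (g i)) = scale c ((f \<circ> g) i)" using ma_scale[OF la fM] by simp
        moreover have "f \<circ> g \<in> N" using scale_in.IH f by blast
        ultimately show ?thesis using i module.scale_zero_right[OF md] by (simp add: N_def)
      qed
      ultimately show "f \<circ> (\<lambda>v. scale c (g v)) \<in> N" by (simp add: N_def)
    qed
  next
    case (comp_in g h) show ?case
    proof
      fix f assume f: "f \<in> N"
      then have "f \<circ> g \<in> N" using comp_in.IH by blast
      then have "(f \<circ> g) \<circ> h \<in> N" using comp_in.IH by blast
      then show "f \<circ> (g \<circ> h) \<in> N" by (simp add: comp_assoc)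
    qed
  qed
  define W where "W = {q. \<forall>f\<in>N. f q = 0}"
  define R where "R = {f \<in> N. \<forall>q. f q \<in> W}"
  have z0: "(\<lambda>v. 0) \<in> mult_alg scale br" by (rule ma_zerofun[OF la])
  have z0R: "(\<lambda>v. 0) \<in> R" using z0 ma_zero[OF la] by (auto simp: R_def N_def W_def)
  have Rsq: "f \<circ> g = (\<lambda>v. 0)" if "f \<in> R" "g \<in> R" for f g
    using that by (auto simp: R_def W_def)
  have RM: "R \<subseteq> mult_alg scale br" by (auto simp: R_def N_def)
  have Radd: "(\<lambda>v. f v + g v) \<in> R" if f: "f \<in> R" and g: "g \<in> R" for f g
  proof -
    have fM: "f \<in> mult_alg scale br" and gM: "g \<in> mult_alg scale br" using f g RM by auto
    have "(\<lambda>v. f v + g v) \<in> mult_alg scale br" using fM gM by (rule mult_alg.add_in)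
    moreover have "\<forall>i\<in>I. f i + g i = 0" using f g by (auto simp: R_def N_def)
    moreover have "f q + g q \<in> W" for q
    proof -
      have "h (f q + g q) = 0" if h: "h \<in> N" for h
      proof -
        have hM: "h \<in> mult_alg scale br" using h by (simp add: N_def)
        have "h (f q + g q) = h (f q) + h (g q)" by (rule ma_add[OF la hM])
        moreover have "h (f q) = 0" "h (g q) = 0" using f g h by (auto simp: R_def W_def)
        ultimately show ?thesis by simp
      qed
      then show ?thesis by (simp add: W_def)
    qed
    ultimately show ?thesis by (simp add: R_def N_def)
  qed
  have Rscale: "(\<lambda>v. scale c (f v)) \<in> R" if f: "f \<in> R" for f c
  proof -
    have fM: "f \<in> mult_alg scale br" using f RM by auto
    have "(\<lambda>v. scale c (f v)) \<in> mult_alg scale br" using fM by (rule mult_alg.scale_in)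
    moreover have "\<forall>i\<in>I. scale c (f i) = 0" using f module.scale_zero_right[OF md]
      by (auto simp: R_def N_def)
    moreover have "scale c (f q) \<in> W" for q
    proof -
      have "h (scale c (f q)) = 0" if h: "h \<in> N" for h
      proof -
        have hM: "h \<in> mult_alg scale br" using h by (simp add: N_def)
        have "h (scale c (f q)) = scale c (h (f q))" by (rule ma_scale[OF la hM])
        moreover have "h (f q) = 0" using f h by (auto simp: R_def W_def)
        ultimately show ?thesis using module.scale_zero_right[OF md] by simp
      qed
      then show ?thesis by (simp add: W_def)
    qed
    ultimately show ?thesis by (simp add: R_def N_def)
  qed
  have Rleft: "m \<circ> f \<in> R" if f: "f \<in> R" and m: "m \<in> mult_alg scale br" for f m
  proof -
    have fM: "f \<in> mult_alg scale br" using f RM by auto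
    have "m \<circ> f \<in> mult_alg scale br" using m fM by (rule mult_alg.comp_in)
    moreover have "\<forall>i\<in>I. m (f i) = 0" using f ma_zero[OF la m] by (auto simp: R_def N_def)
    moreover have "m (f q) \<in> W" for q
    proof -
      have "h (m (f q)) = 0" if h: "h \<in> N" for h
      proof -
        have "h \<circ> m \<in> N" using N2[OF m] h by blast
        moreover have "\<forall>q. \<forall>fa\<in>N. fa (f q) = 0" using f by (auto simp: R_def W_def)
        ultimately have "(h \<circ> m) (f q) = 0" by blast
        then show ?thesis by simp
      qed
      then show ?thesis by (simp add: W_def)
    qed
    ultimately show ?thesis by (simp add: R_def N_def)
  qed
  have Rright: "f \<circ> m \<in> R" if f: "f \<in> R" and m: "m \<in> mult_alg scale br" for f m
  proof -
    have "f \<circ> m \<in> N" using N2[OF m] f by (auto simp: R_def)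
    moreover have "\<forall>q. f (m q) \<in> W" using f by (auto simp: R_def)
    ultimately show ?thesis by (simp add: R_def)
  qed
  have "mult_ideal scale br R"
    unfolding mult_ideal_def
  proof (intro conjI ballI allI)
    show "R \<subseteq> mult_alg scale br" by (rule RM)
    show "(\<lambda>v. 0) \<in> R" by (rule z0R)
  next
    fix f g assume "f \<in> R" "g \<in> R" then show "(\<lambda>v. f v + g v) \<in> R" by (rule Radd)
  next
    fix c f assume "f \<in> R" then show "(\<lambda>v. scale c (f v)) \<in> R" by (rule Rscale)
  next
    fix f m assume "f \<in> R" "m \<in> mult_alg scale br" then show "m \<circ> f \<in> R" by (rule Rleft)
  next
    fix f m assume "f \<in> R" "m \<in> mult_alg scale br" then show "f \<circ> m \<in> R" by (rule Rright)
  qed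
  have R0: "R = {\<lambda>v. 0}"
  proof (rule ccontr)
    assume "R \<noteq> {\<lambda>v. 0}"
    with \<open>mult_ideal scale br R\<close> msp obtain f g where "f \<in> R" "g \<in> R" "f \<circ> g \<noteq> (\<lambda>v. 0)"
      unfolding mult_alg_semiprime_def by blast
    then show False using Rsq by blast
  qed
  have Rz: "f = (\<lambda>v. 0)" if "f \<in> R" for f using that R0 by blast
  have center: "k = 0" if k: "br k = (\<lambda>v. 0)" for k
  proof (rule ccontr)
    assume kn: "k \<noteq> 0"
    define Z where "Z = {x. \<forall>y. br x y = 0}"
    have "submodule scale Z"
      unfolding submodule_def Z_def
      using la_zeroL[OF la] la_addL[OF la] la_scaleL[OF la] module.scale_zero_right[OF md]
      by simp
    moreover have "\<forall>a\<in>Z. \<forall>x\<in>UNIV. br a x \<in> Z" using la_zeroL[OF la] by (simp add: Z_def)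
    ultimately have "lie_ideal scale br UNIV Z" by (simp add: lie_ideal_def)
    moreover have "Z \<noteq> {0}" using k kn by (auto simp: Z_def fun_eq_iff)
    ultimately obtain a b where "a \<in> Z" "b \<in> Z" "br a b \<noteq> 0"
      using lsp unfolding lie_semiprime_def by blast
    then show False by (simp add: Z_def)
  qed
  define A where "A = {a \<in> L. \<forall>i\<in>I. br a i = 0}"
  have Aid: "lie_ideal scale br L A"
  proof -
    have L0: "0 \<in> L" and Ladd: "\<forall>x\<in>L. \<forall>y\<in>L. x + y \<in> L" and Lsc: "\<forall>c. \<forall>x\<in>L. scale c x \<in> L"
      using Lsub by (auto simp: submodule_def)
    have "submodule scale A"
      unfolding submodule_def A_def
      using L0 Ladd Lsc la_zeroL[OF la] la_addL[OF la] la_scaleL[OF la] module.scale_zero_right[OF md]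
      by simp
    moreover have "br a x \<in> A" if a: "a \<in> A" and x: "x \<in> L" for a x
    proof -
      have aL: "a \<in> L" using a by (simp add: A_def)
      have "br (br a x) i = 0" if i: "i \<in> I" for i
      proof -
        have j: "br a (br x i) + br x (br i a) + br i (br a x) = 0" by (rule la_jac[OF la])
        have "br i x \<in> I" using Ibr i x by blast
        then have "br a (br i x) = 0" using a by (simp add: A_def)
        moreover have "br x i = - br i x" by (rule la_anti[OF la])
        ultimately have 1: "br a (br x i) = 0" using la_negR[OF la, of a "br i x"] by simp
        have "br a i = 0" using a i by (simp add: A_def)
        then have "br i a = 0" using la_anti[OF la, of i a] by simp
        then have 2: "br x (br i a) = 0" using la_zeroR[OF la] by simp
        from j 1 2 have "br i (br a x) = 0" by simp
        then show ?thesis using la_anti[OF la, of "br a x" i] by simp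
      qed
      moreover have "br a x \<in> L" using Lbr aL x by blast
      ultimately show ?thesis by (simp add: A_def)
    qed
    moreover have "A \<subseteq> L" by (auto simp: A_def)
    ultimately show ?thesis by (simp add: lie_ideal_def)
  qed
  have annL: "a = 0" if a: "a \<in> L" and ai: "\<forall>i\<in>I. br a i = 0" for a
  proof (rule ccontr)
    assume an: "a \<noteq> 0"
    have "a \<in> A" using a ai by (simp add: A_def)
    then have "A \<noteq> {0}" using an by blast
    then have "I \<inter> A \<noteq> {0}" using ess Aid by blast
    moreover have "0 \<in> I \<inter> A"
      using Iid Aid by (auto simp: lie_ideal_def submodule_def)
    ultimately obtain k where kI: "k \<in> I" and kA: "k \<in> A" and kn: "k \<noteq> 0" by blast
    have "br k \<in> R"
    proof -
      have "br k \<in> N" using kA by (auto simp: N_def A_def intro: mult_alg.ad_in)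
      moreover have "br k q \<in> W" for q using N1 kI by (simp add: W_def)
      ultimately show ?thesis by (simp add: R_def)
    qed
    then have "br k = (\<lambda>v. 0)" by (rule Rz)
    then show False using center kn by blast
  qed
  have annQ: "c = 0" if ci: "\<forall>i\<in>I. br i c = 0" for c
  proof (rule ccontr)
    assume cn: "c \<noteq> 0"
    have "\<exists>J. lie_ideal scale br L J \<and> Ann br L J = {0} \<and>
          (\<forall>j\<in>J. br j c \<in> L) \<and> (\<exists>j\<in>J. br j c \<noteq> 0)"
      using assms(5) cn unfolding algebra_of_quotients_def by simp
    then obtain J where Jid: "lie_ideal scale br L J" and JL: "\<forall>j\<in>J. br j c \<in> L"
      and Jn: "\<exists>j\<in>J. br j c \<noteq> 0"
      by blast
    obtain j where jJ: "j \<in> J" and jn: "br j c \<noteq> 0" using Jn by blast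
    have jL: "j \<in> L" using Jid jJ by (auto simp: lie_ideal_def)
    have bL: "br j c \<in> L" using JL jJ by blast
    have "br (br j c) i = 0" if i: "i \<in> I" for i
    proof -
      have jac: "br i (br j c) + br j (br c i) + br c (br i j) = 0" by (rule la_jac[OF la])
      have "br c i = 0" using ci i la_anti[OF la, of c i] by simp
      then have 1: "br j (br c i) = 0" using la_zeroR[OF la] by simp
      have "br i j \<in> I" using Ibr i jL by blast
      then have "br (br i j) c = 0" using ci by blast
      then have 2: "br c (br i j) = 0" using la_anti[OF la, of c "br i j"] by simp
      from jac 1 2 have "br i (br j c) = 0" by simp
      then show ?thesis using la_anti[OF la, of "br j c" i] by simp
    qed
    then have "br j c = 0" using annL bL by blast
    then show False using jn by simp
  qed
  show ?thesis
    unfolding dense_ext_def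
  proof (intro ballI impI)
    fix \<mu> assume mu: "\<mu> \<in> mult_alg scale br" and muI: "\<forall>s\<in>I. \<mu> s = 0"
    have muN: "\<mu> \<in> N" using mu muI by (simp add: N_def)
    have "\<mu> q = 0" for q
    proof (rule annQ, intro ballI)
      fix i assume i: "i \<in> I"
      have "br i \<circ> \<mu> \<in> R"
      proof -
        have "br i \<circ> \<mu> \<in> mult_alg scale br" using mu by (auto intro: mult_alg.comp_in mult_alg.ad_in)
        moreover have "\<forall>i'\<in>I. br i (\<mu> i') = 0" using muI la_zeroR[OF la] by simp
        moreover have "br i (\<mu> q') \<in> W" for q' using N1 i by (simp add: W_def)
        ultimately show ?thesis by (simp add: R_def N_def)
      qed
      then have "br i \<circ> \<mu> = (\<lambda>v. 0)" by (rule Rz)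
      then show "br i (\<mu> q) = 0" by (metis comp_apply)
    qed
    then show "\<mu> = (\<lambda>v. 0)" by auto
  qed
qed

end
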